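(* Let $S$ be an upper semilattice. Then there exists no upper semilattice homomorphism from any subsemilattice $S_0\subseteq S$ onto $\mathrm{Id}(S)$.
   Context: For an upper semilattice (join-semilattice) $S$, an ideal of $S$ is a (possibly empty) upward directed downset of $S$ (downset: $x\le y\in d\Rightarrow x\in d$), equivalently a possibly empty subset closed under finite joins and downward closed. $\mathrm{Id}(S)$ denotes the set of all ideals of $S$, including $\emptyset$, ordered by inclusion; it is a complete lattice, regarded here as an upper semilattice under its join (the join of two ideals is the ideal generated by their union). A subsemilattice of $S$ is a subset closed under binary joins. *)

theory Defs
  imports Main
begin

text \<open>Ideals of an upper semilattice: possibly empty, upward directed downsets.\<close>
definition sl_ideal :: "'a::semilattice_sup set \<Rightarrow> bool" where
  "sl_ideal d \<longleftrightarrow>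
     (\<forall>x y. x \<le> y \<and> y \<in> d \<longrightarrow> x \<in> d) \<and>
     (\<forall>x\<in>d. \<forall>y\<in>d. \<exists>z\<in>d. x \<le> z \<and> y \<le> z)"

definition Id_sl :: "'a::semilattice_sup set set" where
  "Id_sl = {d. sl_ideal d}"

definition ideal_join :: "'a::semilattice_sup set \<Rightarrow> 'a set \<Rightarrow> 'a set" where
  "ideal_join d e = \<Inter>{i. sl_ideal i \<and> d \<union> e \<subseteq> i}"

definition subsemilattice :: "'a::semilattice_sup set \<Rightarrow> bool" where
  "subsemilattice S0 \<longleftrightarrow> (\<forall>x\<in>S0. \<forall>y\<in>S0. sup x y \<in> S0)"

end

theory Submission
  imports Defs
begin

lemma ij_sub: "d \<subseteq> ideal_join d e"
  unfolding ideal_join_def by blast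

lemma ij_eq: "sl_ideal I \<Longrightarrow> d \<subseteq> I \<Longrightarrow> ideal_join d I = I"
  unfolding ideal_join_def by blast

lemma ideal_sup: "sl_ideal I \<Longrightarrow> a \<in> I \<Longrightarrow> b \<in> I \<Longrightarrow> sup a b \<in> I"
  unfolding sl_ideal_def by (meson le_sup_iff)

theorem theorem3p1:
  fixes S0 :: "'a::semilattice_sup set"
  assumes "subsemilattice S0"
  shows "\<not> (\<exists>f :: 'a \<Rightarrow> 'a set.
              (\<forall>x\<in>S0. \<forall>y\<in>S0. f (sup x y) = ideal_join (f x) (f y)) \<and>
              f ` S0 = Id_sl)"
proof
  assume "\<exists>f :: 'a \<Rightarrow> 'a set.
              (\<forall>x\<in>S0. \<forall>y\<in>S0. f (sup x y) = ideal_join (f x) (f y)) \<and>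
              f ` S0 = Id_sl"
  then obtain f :: "'a \<Rightarrow> 'a set" where hom: "\<forall>x\<in>S0. \<forall>y\<in>S0. f (sup x y) = ideal_join (f x) (f y)"
    and onto: "f ` S0 = Id_sl" by blast
  have sub: "\<And>x y. x \<in> S0 \<Longrightarrow> y \<in> S0 \<Longrightarrow> sup x y \<in> S0"
    using assms unfolding subsemilattice_def by blast
  have fid: "\<And>x. x \<in> S0 \<Longrightarrow> sl_ideal (f x)"
    using onto unfolding Id_sl_def by blast
  have mono: "\<And>x y. x \<in> S0 \<Longrightarrow> y \<in> S0 \<Longrightarrow> x \<le> y \<Longrightarrow> f x \<subseteq> f y"
  proof -
    fix x y assume x: "x \<in> S0" and y: "y \<in> S0" and le: "x \<le> y"
    have "f y = f (sup x y)" using le by (simp add: sup_absorb2)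
    also have "\<dots> = ideal_join (f x) (f y)" using hom x y by blast
    finally show "f x \<subseteq> f y" using ij_sub by metis
  qed
  define A where "A = {I. sl_ideal I \<and> (\<forall>s\<in>I. \<exists>b\<in>I \<inter> S0. s \<le> b)
                       \<and> (\<forall>s\<in>I \<inter> S0. f s \<subseteq> I \<and> f s \<noteq> I)}"
  have "\<forall>C\<in>chains A. \<Union>C \<in> A"
  proof
    fix C assume C: "C \<in> chains A"
    hence CA: "C \<subseteq> A" and ch: "\<And>X Y. X \<in> C \<Longrightarrow> Y \<in> C \<Longrightarrow> X \<subseteq> Y \<or> Y \<subseteq> X"
      unfolding chains_def chain_subset_def by blast+
    have id: "sl_ideal (\<Union>C)"
      unfolding sl_ideal_def
    proof (intro conjI allI impI ballI)
      fix x y assume "x \<le> y \<and> y \<in> \<Union>C"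
      then obtain X where "X \<in> C" "y \<in> X" "x \<le> y" by blast
      moreover have "sl_ideal X" using CA \<open>X \<in> C\<close> unfolding A_def by blast
      ultimately show "x \<in> \<Union>C" unfolding sl_ideal_def by blast
    next
      fix x y assume "x \<in> \<Union>C" "y \<in> \<Union>C"
      then obtain X Y where XY: "X \<in> C" "Y \<in> C" "x \<in> X" "y \<in> Y" by blast
      then obtain Z where Z: "Z \<in> C" "x \<in> Z" "y \<in> Z" using ch by blast
      have "sl_ideal Z" using CA Z unfolding A_def by blast
      then obtain z where "z \<in> Z" "x \<le> z" "y \<le> z" using Z unfolding sl_ideal_def by blast
      thus "\<exists>z\<in>\<Union>C. x \<le> z \<and> y \<le> z" using Z by blast
    qed
    have g: "\<forall>s\<in>\<Union>C. \<exists>b\<in>\<Union>C \<inter> S0. s \<le> b"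
    proof
      fix s assume "s \<in> \<Union>C"
      then obtain X where "X \<in> C" "s \<in> X" by blast
      then obtain b where "b \<in> X \<inter> S0" "s \<le> b" using CA unfolding A_def by blast
      thus "\<exists>b\<in>\<Union>C \<inter> S0. s \<le> b" using \<open>X \<in> C\<close> by blast
    qed
    have h: "\<forall>s\<in>\<Union>C \<inter> S0. f s \<subseteq> \<Union>C \<and> f s \<noteq> \<Union>C"
    proof
      fix s assume "s \<in> \<Union>C \<inter> S0"
      then obtain X where X: "X \<in> C" "s \<in> X" "s \<in> S0" by blast
      hence fs: "f s \<subseteq> X" "f s \<noteq> X" using CA unfolding A_def by blast+
      then obtain t where t: "t \<in> X" "t \<notin> f s" by blast
      show "f s \<subseteq> \<Union>C \<and> f s \<noteq> \<Union>C" using fs t X by blast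
    qed
    show "\<Union>C \<in> A" using id g h unfolding A_def by blast
  qed
  then obtain M where MA: "M \<in> A" and max: "\<forall>X\<in>A. M \<subseteq> X \<longrightarrow> X = M"
    using Zorn_Lemma by blast
  have Mid: "sl_ideal M" and Mg: "\<forall>s\<in>M. \<exists>b\<in>M \<inter> S0. s \<le> b"
    and Mh: "\<forall>s\<in>M \<inter> S0. f s \<subseteq> M \<and> f s \<noteq> M" using MA unfolding A_def by blast+
  have "M \<in> f ` S0" using onto Mid unfolding Id_sl_def by blast
  then obtain x where x: "x \<in> S0" "f x = M" by blast
  have xM: "x \<notin> M" using Mh x by blast
  define M' where "M' = {s. s \<le> x \<or> (\<exists>a\<in>M. s \<le> sup a x)}"
  have key: "\<And>s. s \<in> M' \<Longrightarrow> \<exists>b. (b = x \<or> (\<exists>c\<in>M \<inter> S0. b = sup c x)) \<and> s \<le> b"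
  proof -
    fix s assume "s \<in> M'"
    then consider "s \<le> x" | a where "a \<in> M" "s \<le> sup a x" unfolding M'_def by blast
    thus "\<exists>b. (b = x \<or> (\<exists>c\<in>M \<inter> S0. b = sup c x)) \<and> s \<le> b"
    proof cases
      case 1 thus ?thesis by blast
    next
      case 2
      then obtain c where "c \<in> M \<inter> S0" "a \<le> c" using Mg by blast
      hence "s \<le> sup c x" using 2 by (meson order_trans sup_mono order_refl)
      thus ?thesis using \<open>c \<in> M \<inter> S0\<close> by blast
    qed
  qed
  have bM': "\<And>b. b = x \<or> (\<exists>c\<in>M \<inter> S0. b = sup c x) \<Longrightarrow> b \<in> M' \<inter> S0 \<and> f b = M"
  proof -
    fix b assume "b = x \<or> (\<exists>c\<in>M \<inter> S0. b = sup c x)"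
    thus "b \<in> M' \<inter> S0 \<and> f b = M"
    proof
      assume "b = x" thus ?thesis using x unfolding M'_def by auto
    next
      assume "\<exists>c\<in>M \<inter> S0. b = sup c x"
      then obtain c where c: "c \<in> M" "c \<in> S0" "b = sup c x" by blast
      have "f b = ideal_join (f c) M" using hom c x by simp
      also have "\<dots> = M" using ij_eq Mid Mh c by blast
      finally have "f b = M" .
      moreover have "b \<in> M'" using c unfolding M'_def by blast
      ultimately show ?thesis using c x sub by blast
    qed
  qed
  have M'id: "sl_ideal M'"
    unfolding sl_ideal_def
  proof (intro conjI allI impI ballI)
    fix s t assume "s \<le> t \<and> t \<in> M'"
    thus "s \<in> M'" unfolding M'_def using order_trans by blast
  next
    fix s t assume s: "s \<in> M'" and t: "t \<in> M'"
    obtain b where b: "b = x \<or> (\<exists>c\<in>M \<inter> S0. b = sup c x)" "s \<le> b" using key s by blast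
    obtain b' where b': "b' = x \<or> (\<exists>c\<in>M \<inter> S0. b' = sup c x)" "t \<le> b'" using key t by blast
    have "sup b b' \<in> M'"
    proof -
      have "\<exists>a\<in>M. sup b b' \<le> sup a x" if "b = x \<or> (\<exists>c\<in>M \<inter> S0. b = sup c x)"
          "b' = x \<or> (\<exists>c\<in>M \<inter> S0. b' = sup c x)" "\<not> sup b b' \<le> x"
      proof -
        from that consider c where "c \<in> M" "b = sup c x" "b' = x"
          | c where "c \<in> M" "b' = sup c x" "b = x"
          | c c' where "c \<in> M" "c' \<in> M" "b = sup c x" "b' = sup c' x"
          | "b = x" "b' = x" by blast
        thus ?thesis
        proof cases
          case 1 thus ?thesis by (intro bexI[of _ c]) auto
        next
          case 2 thus ?thesis by (intro bexI[of _ c]) auto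
        next
          case 3
          have "sup c c' \<in> M" using ideal_sup Mid 3 by blast
          thus ?thesis using 3 by (intro bexI[of _ "sup c c'"]) (auto intro: le_supI1 le_supI2)
        next
          case 4 thus ?thesis using that by simp
        qed
      qed
      thus ?thesis using b b' unfolding M'_def by blast
    qed
    thus "\<exists>z\<in>M'. s \<le> z \<and> t \<le> z" using b b' by (meson le_supI1 le_supI2)
  qed
  have "M' \<in> A"
    unfolding A_def
  proof (intro CollectI conjI M'id ballI)
    fix s assume "s \<in> M'"
    then obtain b where "b = x \<or> (\<exists>c\<in>M \<inter> S0. b = sup c x)" "s \<le> b" using key by blast
    thus "\<exists>b\<in>M' \<inter> S0. s \<le> b" using bM' by blast
  next
    fix s assume s: "s \<in> M' \<inter> S0"
    then obtain b where b: "b = x \<or> (\<exists>c\<in>M \<inter> S0. b = sup c x)" "s \<le> b" using key by blast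
    hence "b \<in> S0" "f b = M" using bM' by blast+
    hence "f s \<subseteq> M" using mono s b by blast
    moreover have "x \<in> M'" unfolding M'_def by simp
    moreover have "M \<subseteq> M'" unfolding M'_def by (auto intro: le_supI1)
    ultimately show "f s \<subseteq> M'" "f s \<noteq> M'" using xM by blast+
  qed
  moreover have "M \<subseteq> M'" unfolding M'_def by (auto intro: le_supI1)
  ultimately have "M' = M" using max by blast
  moreover have "x \<in> M'" unfolding M'_def by simp
  ultimately show False using xM by blast
qed

end
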